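(* Let $\lambda_1,\dots,\lambda_n$ be positive integers, $L=\mathrm{lcm}(\lambda_1,\dots,\lambda_n)$, $\omega_i=L/\lambda_i$, and $\Lambda=\langle1/\lambda_1,\dots,1/\lambda_n\rangle$ the additive submonoid of $\mathbb{Q}_{\ge}$ they generate. If $\Lambda$ is quasinormal, then $L+1$ lies in the additive submonoid $\langle\omega_1,\dots,\omega_n\rangle$ of $\mathbb{N}$ generated by $\omega_1,\dots,\omega_n$.
   Context: A submonoid $S$ of $\mathbb{Q}_{\ge}$ is quasinormal if whenever $x\in S$ and $x\ge p$ for a positive integer $p$, there exist $y_1,\dots,y_p\in S$ with $y_i\ge1$ for all $i$ and $x=y_1+\cdots+y_p$. *)

theory Defs
  imports Complex_Main
begin

inductive_set add_submonoid_gen :: "'a::monoid_add set \<Rightarrow> 'a set" for G where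
  zero: "0 \<in> add_submonoid_gen G"
| add: "x \<in> G \<Longrightarrow> y \<in> add_submonoid_gen G \<Longrightarrow> x + y \<in> add_submonoid_gen G"

definition quasinormal :: "rat set \<Rightarrow> bool" where
  "quasinormal S \<longleftrightarrow>
     (\<forall>x\<in>S. \<forall>p::nat. 0 < p \<and> of_nat p \<le> x \<longrightarrow>
        (\<exists>y::nat \<Rightarrow> rat. (\<forall>i<p. y i \<in> S \<and> 1 \<le> y i) \<and> x = (\<Sum>i<p. y i)))"

end

theory Submission
  imports Defs
begin

lemma gen_add: "x \<in> add_submonoid_gen G \<Longrightarrow> y \<in> add_submonoid_gen G \<Longrightarrow> x + y \<in> add_submonoid_gen G"
proof (induction x rule: add_submonoid_gen.induct)
  case zero then show ?case by simp
next
  case (add g x) then show ?case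
    by (metis add_submonoid_gen.add add.assoc)
qed

lemma gen_mult: "(w::nat) \<in> G \<Longrightarrow> k * w \<in> add_submonoid_gen G"
proof (induction k)
  case 0 then show ?case by (simp add: add_submonoid_gen.zero)
next
  case (Suc k) then show ?case by (simp add: add_submonoid_gen.add)
qed

lemma gen_sum: "finite W \<Longrightarrow> W \<subseteq> G \<Longrightarrow> (\<Sum>w\<in>W. f w * w) \<in> add_submonoid_gen (G::nat set)"
proof (induction W rule: finite_induct)
  case empty then show ?case by (simp add: add_submonoid_gen.zero)
next
  case (insert a A) then show ?case by (simp add: gen_add gen_mult)
qed

lemma bez: "finite (A::nat set) \<Longrightarrow> \<exists>c. int (Gcd A) = (\<Sum>a\<in>A. c a * int a)"
proof (induction A rule: finite_induct)
  case empty then show ?case by simp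
next
  case (insert a A)
  then obtain c where c: "int (Gcd A) = (\<Sum>a\<in>A. c a * int a)" by blast
  obtain u v where uv: "u * int a + v * int (Gcd A) = gcd (int a) (int (Gcd A))"
    using bezout_int by blast
  define c' where "c' = (\<lambda>b. if b = a then u else v * c b)"
  have "(\<Sum>b\<in>A. c' b * int b) = v * (\<Sum>b\<in>A. c b * int b)"
    unfolding c'_def using insert(2) by (auto simp: sum_distrib_left intro!: sum.cong)
  have "int (Gcd (insert a A)) = u * int a + v * int (Gcd A)" using uv by simp
  also have "\<dots> = (\<Sum>b\<in>insert a A. c' b * int b)"
    using insert(1,2) c \<open>(\<Sum>b\<in>A. c' b * int b) = _\<close> by (simp add: c'_def)
  finally have "int (Gcd (insert a A)) = (\<Sum>b\<in>insert a A. c' b * int b)" .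
  then show ?case by blast
qed

theorem proposition4p9:
  fixes n :: nat and lam :: "nat \<Rightarrow> nat"
  assumes n_pos: "1 \<le> n"
    and lam_pos: "\<forall>i\<in>{1..n}. 0 < lam i"
    and qn: "quasinormal (add_submonoid_gen ((\<lambda>i. 1 / of_nat (lam i) :: rat) ` {1..n}))"
  shows "Lcm (lam ` {1..n}) + 1
           \<in> add_submonoid_gen ((\<lambda>i. Lcm (lam ` {1..n}) div lam i) ` {1..n})"
proof -
  define L where "L = Lcm (lam ` {1..n})"
  define W where "W = (\<lambda>i. L div lam i) ` {1..n}"
  define G where "G = ((\<lambda>i. 1 / of_nat (lam i) :: rat) ` {1..n})"
  have Lpos: "L > 0" unfolding L_def using lam_pos
    by (metis Lcm_0_iff finite_atLeastAtMost finite_imageI gr0I imageE less_irrefl)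
  have dvdL: "lam i dvd L" if "i \<in> {1..n}" for i unfolding L_def using that by simp
  have finW: "finite W" unfolding W_def by simp
  have Wpos: "w > 0" if wW: "w \<in> W" for w
  proof -
    obtain i where i: "i \<in> {1..n}" "w = L div lam i" using wW unfolding W_def by auto
    show ?thesis using dvdL[OF i(1)] lam_pos i Lpos by (simp add: div_greater_zero_iff dvd_imp_le)
  qed
  have wdvd: "w dvd L" if "w \<in> W" for w
    using that dvdL unfolding W_def by (auto, metis dvd_mult_div_cancel dvd_triv_right)
  have gcd1: "Gcd W = 1"
  proof -
    define d where "d = Gcd W"
    have "d dvd w" if "w \<in> W" for w using that d_def by simp
    have "lam i dvd L div d" if i: "i \<in> {1..n}" for i
    proof -
      have "d dvd L div lam i" using \<open>\<And>w. w \<in> W \<Longrightarrow> d dvd w\<close> i unfolding W_def by auto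
      then obtain k where k: "L div lam i = d * k" by (elim dvdE)
      have "L = lam i * (d * k)" using k dvdL[OF i] by (metis dvd_mult_div_cancel)
      then have "L div d = lam i * k" using Wpos
        by (metis (no_types) Lpos div_mult_self1_is_m mult.left_commute mult_is_0 neq0_conv)
      then show ?thesis by simp
    qed
    then have "L dvd L div d" unfolding L_def by (simp add: Lcm_least)
    moreover have "d \<noteq> 0"
    proof
      assume "d = 0"
      have w1: "L div lam 1 \<in> W" using n_pos unfolding W_def by auto
      then have "d dvd L div lam 1" using \<open>\<And>w. w \<in> W \<Longrightarrow> d dvd w\<close> by blast
      then show False using \<open>d = 0\<close> Wpos[OF w1] by simp
    qed
    moreover have "d dvd L"
    proof -
      have w1: "L div lam 1 \<in> W" using n_pos unfolding W_def by auto
      then have "d dvd L div lam 1" using \<open>\<And>w. w \<in> W \<Longrightarrow> d dvd w\<close> by blast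
      then show ?thesis using wdvd[OF w1] by (rule dvd_trans)
    qed
    ultimately have "L div d > 0" using Lpos by (simp add: div_greater_zero_iff dvd_imp_le)
    with \<open>L dvd L div d\<close> have "L \<le> L div d" by (rule dvd_imp_le)
    have "d \<le> 1"
    proof (rule ccontr)
      assume "\<not> d \<le> 1"
      then have "L div d < L" using Lpos by (simp add: div_less_dividend)
      with \<open>L \<le> L div d\<close> show False by simp
    qed
    then show ?thesis using \<open>d \<noteq> 0\<close> d_def by linarith
  qed
  obtain c where c: "int (Gcd W) = (\<Sum>w\<in>W. c w * int w)" using bez[OF finW] by blast
  define t where "t = (\<lambda>w. nat \<bar>c w\<bar> + 1)"
  define p where "p = (\<Sum>w\<in>W. t w)"
  define a where "a = (\<lambda>w. nat (c w + int (t w * (L div w))))"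
  have "W \<noteq> {}" using n_pos unfolding W_def by auto
  then have ppos: "p > 0" unfolding p_def t_def using finW by (intro sum_pos) auto
  have aint: "int (a w) = c w + int (t w * (L div w))" if "w \<in> W" for w
  proof -
    have "L div w \<ge> 1" using wdvd[OF that] Wpos[OF that] Lpos
      by (metis One_nat_def Suc_leI div_greater_zero_iff dvd_imp_le)
    then have "t w * (L div w) \<ge> t w" by simp
    then have "int (t w * (L div w)) \<ge> \<bar>c w\<bar> + 1" unfolding t_def by linarith
    then have "c w + int (t w * (L div w)) \<ge> 0" by linarith
    then show ?thesis unfolding a_def by (simp only: int_nat_eq) simp
  qed
  define N where "N = (\<Sum>w\<in>W. a w * w)"
  have "int N = (\<Sum>w\<in>W. (c w + int (t w * (L div w))) * int w)"
    unfolding N_def of_nat_sum using aint by (auto intro!: sum.cong)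
  also have "\<dots> = (\<Sum>w\<in>W. c w * int w) + (\<Sum>w\<in>W. int (t w * L))"
  proof -
    have "\<And>w. w \<in> W \<Longrightarrow> int (t w * (L div w)) * int w = int (t w * L)"
      using wdvd by (simp flip: of_nat_mult)
    then have "(\<Sum>w\<in>W. int (t w * (L div w)) * int w) = (\<Sum>w\<in>W. int (t w * L))"
      by (rule sum.cong[OF refl])
    then show ?thesis by (simp only: sum.distrib distrib_right)
  qed
  also have "\<dots> = int (p * L + 1)"
    using c gcd1 by (simp add: p_def sum_distrib_right of_nat_sum)
  finally have N: "N = p * L + 1" by linarith
  have NW: "N \<in> add_submonoid_gen W" unfolding N_def using finW gen_sum by blast
  have toG: "m \<in> add_submonoid_gen W \<Longrightarrow> (of_nat m / of_nat L :: rat) \<in> add_submonoid_gen G" for m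
  proof (induction m rule: add_submonoid_gen.induct)
    case zero then show ?case by (simp add: add_submonoid_gen.zero)
  next
    case (add w m)
    then obtain i where i: "i \<in> {1..n}" "w = L div lam i" unfolding W_def by auto
    have "(of_nat w / of_nat L :: rat) = 1 / of_nat (lam i)"
      using i dvdL[OF i(1)] Lpos lam_pos by (auto simp: of_nat_div field_simps elim!: dvdE)
    moreover have "1 / of_nat (lam i) \<in> G" unfolding G_def using i by auto
    ultimately show ?case using add
      by (metis add_divide_distrib add_submonoid_gen.add of_nat_add)
  qed
  have fromG: "x \<in> add_submonoid_gen G \<Longrightarrow> \<exists>m \<in> add_submonoid_gen W. x = of_nat m / of_nat L" for x
  proof (induction x rule: add_submonoid_gen.induct)
    case zero then show ?case by (auto intro: add_submonoid_gen.zero)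
  next
    case (add g x)
    then obtain i where i: "i \<in> {1..n}" "g = 1 / of_nat (lam i)" unfolding G_def by auto
    obtain m where m: "m \<in> add_submonoid_gen W" "x = of_nat m / of_nat L" using add by blast
    have "g = of_nat (L div lam i) / of_nat L"
      using i dvdL[OF i(1)] Lpos lam_pos by (auto simp: of_nat_div field_simps elim!: dvdE)
    moreover have "L div lam i \<in> W" unfolding W_def using i by auto
    ultimately show ?case using m
      by (metis add_divide_distrib add_submonoid_gen.add of_nat_add)
  qed
  define x where "x = (of_nat N / of_nat L :: rat)"
  have xG: "x \<in> add_submonoid_gen G" unfolding x_def using toG NW by blast
  have "of_nat p \<le> x" unfolding x_def N using Lpos by (simp add: field_simps)
  then obtain y where y: "\<forall>i<p. y i \<in> add_submonoid_gen G \<and> 1 \<le> y i" "x = (\<Sum>i<p. y i)"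
    using qn xG ppos unfolding quasinormal_def G_def by blast
  have "\<forall>i<p. \<exists>m. m \<in> add_submonoid_gen W \<and> y i = of_nat m / of_nat L" using y fromG by blast
  then obtain m where m: "\<And>i. i < p \<Longrightarrow> m i \<in> add_submonoid_gen W \<and> y i = of_nat (m i) / of_nat L"
    by metis
  have mge: "m i \<ge> L" if "i < p" for i
  proof -
    have "1 \<le> (of_nat (m i) / of_nat L :: rat)" using y m that by metis
    then have "(of_nat L :: rat) \<le> of_nat (m i)" using Lpos by (simp add: field_simps)
    then show ?thesis by simp
  qed
  have "(of_nat N :: rat) = of_nat L * (\<Sum>i<p. y i)" using y(2) Lpos unfolding x_def by (simp add: field_simps)
  also have "\<dots> = (\<Sum>i<p. of_nat (m i))" using m Lpos by (simp add: sum_distrib_left)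
  finally have "N = (\<Sum>i<p. m i)" by (metis of_nat_eq_iff of_nat_sum)
  moreover have "(\<Sum>i<p. m i - L) + p * L = (\<Sum>i<p. (m i - L) + L)" by (simp add: sum.distrib)
  moreover have "\<dots> = (\<Sum>i<p. m i)" using mge by (intro sum.cong) auto
  ultimately have "(\<Sum>i<p. m i - L) + p * L = p * L + 1" using N by simp
  then have s1: "(\<Sum>i<p. m i - L) = 1" by simp
  then obtain i where i: "i < p" "m i - L \<noteq> 0" by (metis lessThan_iff sum.neutral zero_neq_one)
  have "m i - L \<le> 1" using s1 i by (metis finite_lessThan lessThan_iff member_le_sum zero_le)
  then have "m i = L + 1" using i mge by linarith
  then show ?thesis using m[OF i(1)] unfolding L_def W_def by simp
qed
end
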